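(* Let $n\ge 2$ and $1\le p\le n-1$. Let $a_{n,p}$ be the number of $\alpha\in\mathcal{OCT}_n$ with $F(\alpha)=\{1\}$ and $h(\alpha)=p$. Then $a_{n,p}$ also equals the number of $\alpha\in\mathcal{OCT}_n$ with $F(\alpha)=\{n\}$ and $h(\alpha)=p$, and $a_{n,p}=\binom{n-2}{p-1}$.
   Context: $X_n=\{1,2,\dots,n\}$ with its usual order; maps are written on the right ($x\alpha$). A map $\alpha:X_n\to X_n$ is order-preserving if $x\le y$ implies $x\alpha\le y\alpha$, and a contraction if $|x\alpha-y\alpha|\le|x-y|$ for all $x,y$. $\mathcal{OCT}_n$ is the set of all order-preserving contractions $X_n\to X_n$ (defined on all of $X_n$). For such $\alpha$: the height is $h(\alpha)=|\mathrm{Im}\,\alpha|$, and $F(\alpha)=\{x\in X_n:x\alpha=x\}$ is the set of fixed points. *)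

theory Defs
  imports Main "HOL-Library.FuncSet"
begin

text \<open>Full transformations of X_n = {1..n} are represented as extensional functions
  in PiE {1..n} (%_. {1..n}) (value undefined outside X_n), so that the set is finite.\<close>

definition OCT :: "nat \<Rightarrow> (nat \<Rightarrow> nat) set" where
  "OCT n = {\<alpha> \<in> {1..n} \<rightarrow>\<^sub>E {1..n}.
      (\<forall>x\<in>{1..n}. \<forall>y\<in>{1..n}. x \<le> y \<longrightarrow> \<alpha> x \<le> \<alpha> y) \<and>
      (\<forall>x\<in>{1..n}. \<forall>y\<in>{1..n}. \<bar>int (\<alpha> x) - int (\<alpha> y)\<bar> \<le> \<bar>int x - int y\<bar>)}"

definition height :: "nat \<Rightarrow> (nat \<Rightarrow> nat) \<Rightarrow> nat" where
  "height n \<alpha> = card (\<alpha> ` {1..n})"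

definition fixset :: "nat \<Rightarrow> (nat \<Rightarrow> nat) \<Rightarrow> nat set" where
  "fixset n \<alpha> = {x \<in> {1..n}. \<alpha> x = x}"

end

theory Submission
  imports Defs
begin

definition stepP :: "nat \<Rightarrow> (nat \<Rightarrow> nat) \<Rightarrow> bool" where
  "stepP n \<alpha> \<longleftrightarrow> (\<forall>x. 1 \<le> x \<longrightarrow> x < n \<longrightarrow> \<alpha> (Suc x) = \<alpha> x \<or> \<alpha> (Suc x) = Suc (\<alpha> x))"

lemma steps:
  assumes "stepP n \<alpha>" "1 \<le> x" "x \<le> y" "y \<le> n"
  shows "\<alpha> x \<le> \<alpha> y \<and> \<alpha> y \<le> \<alpha> x + (y - x)"
  using assms(3,4)
proof (induction y rule: dec_induct)
  case base then show ?case by simp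
next
  case (step k)
  then have "\<alpha> (Suc k) = \<alpha> k \<or> \<alpha> (Suc k) = Suc (\<alpha> k)"
    using assms(1,2) unfolding stepP_def by auto
  with step show ?case by auto
qed

lemma image_step:
  assumes "stepP n \<alpha>" "\<alpha> 1 = 1" "1 \<le> m" "m \<le> n"
  shows "\<alpha> ` {1..m} = {1..\<alpha> m}"
  using assms(3,4)
proof (induction m rule: dec_induct)
  case base then show ?case using assms(2) by simp
next
  case (step k)
  then have h: "\<alpha> (Suc k) = \<alpha> k \<or> \<alpha> (Suc k) = Suc (\<alpha> k)"
    using assms(1) unfolding stepP_def by auto
  have "{1..Suc k} = insert (Suc k) {1..k}" by auto
  then have "\<alpha> ` {1..Suc k} = insert (\<alpha> (Suc k)) {1..\<alpha> k}" using step by auto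
  also have "\<dots> = {1..\<alpha> (Suc k)}"
  proof -
    have "1 \<le> \<alpha> k" using steps[OF assms(1), of 1 k] assms(2) step by auto
    then show ?thesis using h by auto
  qed
  finally show ?case .
qed

lemma OCT_D:
  assumes "\<alpha> \<in> OCT n"
  shows "\<alpha> \<in> {1..n} \<rightarrow>\<^sub>E {1..n}"
    "\<forall>x\<in>{1..n}. \<forall>y\<in>{1..n}. x \<le> y \<longrightarrow> \<alpha> x \<le> \<alpha> y"
    "\<forall>x\<in>{1..n}. \<forall>y\<in>{1..n}. \<bar>int (\<alpha> x) - int (\<alpha> y)\<bar> \<le> \<bar>int x - int y\<bar>"
proof -
  have c: "\<alpha> \<in> {1..n} \<rightarrow>\<^sub>E {1..n} \<and> (\<forall>x\<in>{1..n}. \<forall>y\<in>{1..n}. x \<le> y \<longrightarrow> \<alpha> x \<le> \<alpha> y) \<and>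
    (\<forall>x\<in>{1..n}. \<forall>y\<in>{1..n}. \<bar>int (\<alpha> x) - int (\<alpha> y)\<bar> \<le> \<bar>int x - int y\<bar>)"
    using assms unfolding OCT_def mem_Collect_eq .
  show "\<alpha> \<in> {1..n} \<rightarrow>\<^sub>E {1..n}" using conjunct1[OF c] .
  show "\<forall>x\<in>{1..n}. \<forall>y\<in>{1..n}. x \<le> y \<longrightarrow> \<alpha> x \<le> \<alpha> y" using conjunct1[OF conjunct2[OF c]] .
  show "\<forall>x\<in>{1..n}. \<forall>y\<in>{1..n}. \<bar>int (\<alpha> x) - int (\<alpha> y)\<bar> \<le> \<bar>int x - int y\<bar>" using conjunct2[OF conjunct2[OF c]] .
qed

lemma OCT_I:
  assumes "\<alpha> \<in> {1..n} \<rightarrow>\<^sub>E {1..n}"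
    "\<forall>x\<in>{1..n}. \<forall>y\<in>{1..n}. x \<le> y \<longrightarrow> \<alpha> x \<le> \<alpha> y"
    "\<forall>x\<in>{1..n}. \<forall>y\<in>{1..n}. \<bar>int (\<alpha> x) - int (\<alpha> y)\<bar> \<le> \<bar>int x - int y\<bar>"
  shows "\<alpha> \<in> OCT n"
  unfolding OCT_def mem_Collect_eq using assms by (intro conjI)

lemma OCT_stepP: "\<alpha> \<in> OCT n \<Longrightarrow> stepP n \<alpha>"
  unfolding stepP_def
proof (intro allI impI)
  fix x assume O: "\<alpha> \<in> OCT n" and x: "1 \<le> x" "x < n"
  have xs: "x \<in> {1..n}" "Suc x \<in> {1..n}" using x by auto
  have a: "\<alpha> x \<le> \<alpha> (Suc x)" using OCT_D(2)[OF O, rule_format, OF xs(1) xs(2)] by simp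
  have b: "\<bar>int (\<alpha> (Suc x)) - int (\<alpha> x)\<bar> \<le> \<bar>int (Suc x) - int x\<bar>"
    using OCT_D(3)[OF O, rule_format, OF xs(2) xs(1)] .
  have "\<bar>int (Suc x) - int x\<bar> = 1" by simp
  with a b show "\<alpha> (Suc x) = \<alpha> x \<or> \<alpha> (Suc x) = Suc (\<alpha> x)" by auto
qed

lemma char1:
  assumes "n \<ge> 2"
  shows "{\<alpha> \<in> OCT n. fixset n \<alpha> = {1} \<and> height n \<alpha> = p}
       = {\<alpha>. \<alpha> \<in> extensional {1..n} \<and> stepP n \<alpha> \<and> \<alpha> 1 = 1 \<and> \<alpha> 2 = 1 \<and> \<alpha> n = p}"
proof (rule set_eqI, rule iffI)
  fix \<alpha> assume "\<alpha> \<in> {\<alpha> \<in> OCT n. fixset n \<alpha> = {1} \<and> height n \<alpha> = p}"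
  then have O: "\<alpha> \<in> OCT n" and F: "fixset n \<alpha> = {1}" and H: "height n \<alpha> = p" by simp_all
  have S: "stepP n \<alpha>" using OCT_stepP[OF O] .
  have E: "\<alpha> \<in> extensional {1..n}" using OCT_D(1)[OF O] by (simp add: PiE_iff)
  have "1 \<in> fixset n \<alpha>" using F by simp
  then have a1: "\<alpha> 1 = 1" unfolding fixset_def by simp
  have "1 \<le> (1::nat)" "1 < n" using assms by auto
  then have "\<alpha> (Suc 1) = \<alpha> 1 \<or> \<alpha> (Suc 1) = Suc (\<alpha> 1)" using S unfolding stepP_def by blast
  then have "\<alpha> 2 = 1 \<or> \<alpha> 2 = 2" using a1 by (simp add: numeral_2_eq_2)
  moreover have "\<alpha> 2 \<noteq> 2"
  proof
    assume "\<alpha> 2 = 2"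
    then have "2 \<in> fixset n \<alpha>" using assms unfolding fixset_def by simp
    then show False using F by simp
  qed
  ultimately have a2: "\<alpha> 2 = 1" by auto
  have "\<alpha> ` {1..n} = {1..\<alpha> n}" using image_step[OF S a1, of n] assms by auto
  then have "\<alpha> n = p" using H unfolding height_def by auto
  then show "\<alpha> \<in> {\<alpha>. \<alpha> \<in> extensional {1..n} \<and> stepP n \<alpha> \<and> \<alpha> 1 = 1 \<and> \<alpha> 2 = 1 \<and> \<alpha> n = p}"
    using E S a1 a2 by auto
next
  fix \<alpha> assume "\<alpha> \<in> {\<alpha>. \<alpha> \<in> extensional {1..n} \<and> stepP n \<alpha> \<and> \<alpha> 1 = 1 \<and> \<alpha> 2 = 1 \<and> \<alpha> n = p}"
  then have E: "\<alpha> \<in> extensional {1..n}" and S: "stepP n \<alpha>" and a1: "\<alpha> 1 = 1"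
    and a2: "\<alpha> 2 = 1" and an: "\<alpha> n = p" by auto
  have rng: "\<alpha> x \<in> {1..n}" if "x \<in> {1..n}" for x
    using steps[OF S, of 1 x] that a1 by auto
  have mono: "\<alpha> x \<le> \<alpha> y" if "x \<in> {1..n}" "y \<in> {1..n}" "x \<le> y" for x y
    using steps[OF S, of x y] that by auto
  have contr: "\<bar>int (\<alpha> x) - int (\<alpha> y)\<bar> \<le> \<bar>int x - int y\<bar>" if "x \<in> {1..n}" "y \<in> {1..n}" for x y
  proof (cases "x \<le> y")
    case True
    have st: "\<alpha> x \<le> \<alpha> y" "\<alpha> y \<le> \<alpha> x + (y - x)" using steps[OF S, of x y] that True by auto
    have e1: "\<bar>int (\<alpha> x) - int (\<alpha> y)\<bar> = int (\<alpha> y) - int (\<alpha> x)" using st(1) by simp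
    have e2: "\<bar>int x - int y\<bar> = int y - int x" using True by simp
    have "int (\<alpha> y) \<le> int (\<alpha> x) + (int y - int x)" using st(2) True by linarith
    then show ?thesis using e1 e2 by linarith
  next
    case False
    have st: "\<alpha> y \<le> \<alpha> x" "\<alpha> x \<le> \<alpha> y + (x - y)" using steps[OF S, of y x] that False by auto
    have e1: "\<bar>int (\<alpha> x) - int (\<alpha> y)\<bar> = int (\<alpha> x) - int (\<alpha> y)" using st(1) by simp
    have e2: "\<bar>int x - int y\<bar> = int x - int y" using False by simp
    have "int (\<alpha> x) \<le> int (\<alpha> y) + (int x - int y)" using st(2) False by linarith
    then show ?thesis using e1 e2 by linarith
  qed
  have P: "\<alpha> \<in> {1..n} \<rightarrow>\<^sub>E {1..n}" unfolding PiE_iff using E rng by blast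
  have O: "\<alpha> \<in> OCT n" by (rule OCT_I[OF P]) (use mono contr in auto)
  have F: "fixset n \<alpha> = {1}"
  proof -
    have ne: "\<alpha> x \<noteq> x" if "x \<in> {1..n}" "x \<ge> 2" for x
      using steps[OF S, of 2 x] that a2 by auto
    show ?thesis
    proof (rule set_eqI)
      fix x
      show "x \<in> fixset n \<alpha> \<longleftrightarrow> x \<in> {1}"
      proof (cases "x = 1")
        case True then show ?thesis using a1 assms unfolding fixset_def by simp
      next
        case False
        then have "x \<notin> {1..n} \<or> (x \<in> {1..n} \<and> x \<ge> 2)" by auto
        then show ?thesis using False ne
          unfolding fixset_def by blast
      qed
    qed
  qed
  have "\<alpha> ` {1..n} = {1..\<alpha> n}" using image_step[OF S a1, of n] assms by auto
  then have H: "height n \<alpha> = p" using an unfolding height_def by auto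
  show "\<alpha> \<in> {\<alpha> \<in> OCT n. fixset n \<alpha> = {1} \<and> height n \<alpha> = p}" using O F H by auto
qed

definition Jset :: "nat \<Rightarrow> (nat \<Rightarrow> nat) \<Rightarrow> nat set" where
  "Jset x \<alpha> = {y \<in> {3..x}. \<alpha> y = Suc (\<alpha> (y - 1))}"

definition gS :: "nat \<Rightarrow> nat set \<Rightarrow> nat \<Rightarrow> nat" where
  "gS n S = (\<lambda>x. if x \<in> {1..n} then 1 + card {y \<in> S. y \<le> x} else undefined)"

lemma Jform:
  assumes "stepP n \<alpha>" "\<alpha> 1 = 1" "\<alpha> 2 = 1" "1 \<le> x" "x \<le> n"
  shows "\<alpha> x = 1 + card (Jset x \<alpha>)"
proof (cases "x = 1")
  case True then show ?thesis using assms by (simp add: Jset_def)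
next
  case False
  then have "2 \<le> x" using assms by auto
  then show ?thesis using assms(5)
  proof (induction x rule: dec_induct)
    case base then show ?case using assms by (simp add: Jset_def)
  next
    case (step k)
    then have "1 \<le> k" "k < n" by auto
    then have h: "\<alpha> (Suc k) = \<alpha> k \<or> \<alpha> (Suc k) = Suc (\<alpha> k)"
      using assms(1) unfolding stepP_def by blast
    have eq: "Jset (Suc k) \<alpha> = Jset k \<alpha> \<union> (if \<alpha> (Suc k) = Suc (\<alpha> k) then {Suc k} else {})"
      using step(1) unfolding Jset_def by (auto simp: le_Suc_eq)
    have fin: "finite (Jset k \<alpha>)" unfolding Jset_def by auto
    have nin: "Suc k \<notin> Jset k \<alpha>" unfolding Jset_def by auto
    have IH: "\<alpha> k = 1 + card (Jset k \<alpha>)" using step by simp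
    show ?case
    proof (cases "\<alpha> (Suc k) = Suc (\<alpha> k)")
      case True
      then have "Jset (Suc k) \<alpha> = insert (Suc k) (Jset k \<alpha>)" using eq by simp
      then have "card (Jset (Suc k) \<alpha>) = Suc (card (Jset k \<alpha>))" using fin nin by simp
      then show ?thesis using True IH by simp
    next
      case False
      then have "Jset (Suc k) \<alpha> = Jset k \<alpha>" using eq by simp
      moreover have "\<alpha> (Suc k) = \<alpha> k" using h False by blast
      ultimately show ?thesis using IH by simp
    qed
  qed
qed

lemma gS_step:
  assumes "S \<subseteq> {3..n}"
  shows "card {y \<in> S. y \<le> Suc x} = card {y \<in> S. y \<le> x} + (if Suc x \<in> S then 1 else 0)"
proof -
  have eq: "{y \<in> S. y \<le> Suc x} = {y \<in> S. y \<le> x} \<union> (if Suc x \<in> S then {Suc x} else {})"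
    by (auto simp: le_Suc_eq)
  have fin: "finite {y \<in> S. y \<le> x}" by auto
  show ?thesis unfolding eq using fin by auto
qed

lemma gS_in:
  assumes "x \<in> {1..n}"
  shows "gS n S x = 1 + card {y \<in> S. y \<le> x}"
  using assms unfolding gS_def by (rule if_P)

lemma gS_props:
  assumes "S \<subseteq> {3..n}" "n \<ge> 2"
  shows "gS n S \<in> extensional {1..n}" "stepP n (gS n S)" "gS n S 1 = 1" "gS n S 2 = 1"
    "gS n S n = 1 + card S" "Jset n (gS n S) = S"
proof -
  have fs: "finite S" using assms(1) finite_subset by blast
  show "gS n S \<in> extensional {1..n}" unfolding extensional_def gS_def by simp
  have st: "gS n S (Suc x) = gS n S x + (if Suc x \<in> S then 1 else 0)" if "1 \<le> x" "x < n" for x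
  proof -
    have "x \<in> {1..n}" "Suc x \<in> {1..n}" using that by auto
    then show ?thesis using gS_in gS_step[OF assms(1), of x] by simp
  qed
  show "stepP n (gS n S)" unfolding stepP_def
  proof (intro allI impI)
    fix x assume "1 \<le> x" "x < n"
    then show "gS n S (Suc x) = gS n S x \<or> gS n S (Suc x) = Suc (gS n S x)"
      using st[of x] by (cases "Suc x \<in> S") simp_all
  qed
  have e1: "{y \<in> S. y \<le> 1} = {}" and e2: "{y \<in> S. y \<le> 2} = {}" using assms(1) by force+
  have "1 \<in> {1..n}" "2 \<in> {1..n}" using assms(2) by auto
  then show "gS n S 1 = 1" "gS n S 2 = 1" using gS_in e1 e2 by simp_all
  have e3: "{y \<in> S. y \<le> n} = S" using assms(1) by force
  have "n \<in> {1..n}" using assms(2) by auto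
  then show "gS n S n = 1 + card S" using gS_in e3 by simp
  show "Jset n (gS n S) = S"
  proof (rule set_eqI)
    fix y
    show "y \<in> Jset n (gS n S) \<longleftrightarrow> y \<in> S"
    proof (cases "y \<in> {3..n}")
      case True
      define z where "z = y - 1"
      have z: "y = Suc z" "1 \<le> z" "z < n" using True unfolding z_def by auto
      have "gS n S y = gS n S z + (if y \<in> S then 1 else 0)"
        using st[OF z(2,3)] z(1) by simp
      moreover have "y - 1 = z" using z by simp
      ultimately show ?thesis using True unfolding Jset_def by (cases "y \<in> S") simp_all
    next
      case False
      then show ?thesis using assms(1) unfolding Jset_def by blast
    qed
  qed
qed

lemma count1:
  assumes "n \<ge> 2" "1 \<le> p"
  shows "card {\<alpha>. \<alpha> \<in> extensional {1..n} \<and> stepP n \<alpha> \<and> \<alpha> 1 = 1 \<and> \<alpha> 2 = 1 \<and> \<alpha> n = p}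
         = (n - 2) choose (p - 1)"
proof -
  let ?C = "{\<alpha>. \<alpha> \<in> extensional {1..n} \<and> stepP n \<alpha> \<and> \<alpha> 1 = 1 \<and> \<alpha> 2 = 1 \<and> \<alpha> n = p}"
  let ?B = "{B. B \<subseteq> {3..n} \<and> card B = p - 1}"
  have "bij_betw (Jset n) ?C ?B"
  proof (rule bij_betw_byWitness[where f' = "gS n"])
    show "\<forall>a\<in>?C. gS n (Jset n a) = a"
    proof
      fix a assume a: "a \<in> ?C"
      show "gS n (Jset n a) = a"
      proof
        fix x
        show "gS n (Jset n a) x = a x"
        proof (cases "x \<in> {1..n}")
          case True
          have "{y \<in> Jset n a. y \<le> x} = Jset x a" using True unfolding Jset_def by auto
          moreover have "a x = 1 + card (Jset x a)" using Jform[of n a x] a True by simp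
          ultimately show ?thesis using gS_in[OF True] by simp
        next
          case False
          have "a x = undefined" using a False unfolding extensional_def by simp
          moreover have "gS n (Jset n a) x = undefined" unfolding gS_def by (rule if_not_P[OF False])
          ultimately show ?thesis by simp
        qed
      qed
    qed
    show "\<forall>a'\<in>?B. Jset n (gS n a') = a'"
    proof
      fix S assume "S \<in> ?B"
      then have "S \<subseteq> {3..n}" by simp
      then show "Jset n (gS n S) = S" using gS_props(6) assms(1) by blast
    qed
    show "Jset n ` ?C \<subseteq> ?B"
    proof
      fix J assume "J \<in> Jset n ` ?C"
      then obtain a where a: "a \<in> ?C" "J = Jset n a" by auto
      have "a n = 1 + card (Jset n a)" using Jform[of n a n] a assms by simp
      then have "card J = p - 1" using a by auto
      moreover have "J \<subseteq> {3..n}" using a(2) unfolding Jset_def by blast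
      ultimately show "J \<in> ?B" by simp
    qed
    show "gS n ` ?B \<subseteq> ?C"
    proof
      fix f assume "f \<in> gS n ` ?B"
      then obtain S where S: "S \<subseteq> {3..n}" "card S = p - 1" "f = gS n S" by blast
      have "gS n S n = p" using gS_props(5)[OF S(1) assms(1)] S(2) assms(2) by simp
      then show "f \<in> ?C" using gS_props(1-4)[OF S(1) assms(1)] S(3) by simp
    qed
  qed
  then have "card ?C = card ?B" by (rule bij_betw_same_card)
  also have "\<dots> = (n - 2) choose (p - 1)" using n_subsets[of "{3..n}" "p - 1"] by simp
  finally show ?thesis .
qed
definition rho :: "nat \<Rightarrow> (nat \<Rightarrow> nat) \<Rightarrow> nat \<Rightarrow> nat" where
  "rho n \<alpha> = (\<lambda>x. if x \<in> {1..n} then Suc n - \<alpha> (Suc n - x) else undefined)"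

lemma OCT_rng: "\<alpha> \<in> OCT n \<Longrightarrow> x \<in> {1..n} \<Longrightarrow> \<alpha> x \<in> {1..n}"
  using OCT_D(1) by (metis PiE_mem)

lemma rho_OCT:
  assumes O: "\<alpha> \<in> OCT n"
  shows "rho n \<alpha> \<in> OCT n"
proof -
  have r: "\<And>x. x \<in> {1..n} \<Longrightarrow> \<alpha> x \<in> {1..n}" using OCT_rng[OF O] .
  have m: "\<And>x y. x \<in> {1..n} \<Longrightarrow> y \<in> {1..n} \<Longrightarrow> x \<le> y \<Longrightarrow> \<alpha> x \<le> \<alpha> y"
    using OCT_D(2)[OF O] by blast
  have c: "\<And>x y. x \<in> {1..n} \<Longrightarrow> y \<in> {1..n} \<Longrightarrow> \<bar>int (\<alpha> x) - int (\<alpha> y)\<bar> \<le> \<bar>int x - int y\<bar>"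
    using OCT_D(3)[OF O] by blast
  have E: "rho n \<alpha> \<in> {1..n} \<rightarrow>\<^sub>E {1..n}"
  proof
    fix x assume x: "x \<in> {1..n}"
    then have "Suc n - x \<in> {1..n}" by auto
    then have "\<alpha> (Suc n - x) \<in> {1..n}" using r by auto
    then show "rho n \<alpha> x \<in> {1..n}" using x unfolding rho_def by auto
  next
    fix x assume "x \<notin> {1..n}" then show "rho n \<alpha> x = undefined" unfolding rho_def by auto
  qed
  have M: "rho n \<alpha> x \<le> rho n \<alpha> y" if "x \<in> {1..n}" "y \<in> {1..n}" "x \<le> y" for x y
  proof -
    have "\<alpha> (Suc n - y) \<le> \<alpha> (Suc n - x)" using m[of "Suc n - y" "Suc n - x"] that by auto
    then show ?thesis using that unfolding rho_def by auto
  qed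
  have C: "\<bar>int (rho n \<alpha> x) - int (rho n \<alpha> y)\<bar> \<le> \<bar>int x - int y\<bar>" if "x \<in> {1..n}" "y \<in> {1..n}" for x y
  proof -
    have xy: "Suc n - x \<in> {1..n}" "Suc n - y \<in> {1..n}" using that by auto
    have h: "\<bar>int (\<alpha> (Suc n - x)) - int (\<alpha> (Suc n - y))\<bar> \<le> \<bar>int (Suc n - x) - int (Suc n - y)\<bar>"
      using c xy by auto
    have ab: "\<alpha> (Suc n - x) \<in> {1..n}" "\<alpha> (Suc n - y) \<in> {1..n}" using r xy by auto
    have rx: "int (rho n \<alpha> x) = int (Suc n) - int (\<alpha> (Suc n - x))"
      using that ab unfolding rho_def by (simp add: of_nat_diff)
    have ry: "int (rho n \<alpha> y) = int (Suc n) - int (\<alpha> (Suc n - y))"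
      using that ab unfolding rho_def by (simp add: of_nat_diff)
    have ix: "int (Suc n - x) = int (Suc n) - int x" using that by (simp add: of_nat_diff)
    have iy: "int (Suc n - y) = int (Suc n) - int y" using that by (simp add: of_nat_diff)
    have "\<bar>int (rho n \<alpha> x) - int (rho n \<alpha> y)\<bar> = \<bar>int (\<alpha> (Suc n - x)) - int (\<alpha> (Suc n - y))\<bar>"
      unfolding rx ry by linarith
    also have "\<dots> \<le> \<bar>int (Suc n - x) - int (Suc n - y)\<bar>" using h .
    also have "\<dots> = \<bar>int x - int y\<bar>" unfolding ix iy by linarith
    finally show ?thesis .
  qed
  show ?thesis by (rule OCT_I[OF E]) (use M C in auto)
qed

lemma rho_rho:
  assumes O: "\<alpha> \<in> OCT n"
  shows "rho n (rho n \<alpha>) = \<alpha>"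
proof
  fix x
  show "rho n (rho n \<alpha>) x = \<alpha> x"
  proof (cases "x \<in> {1..n}")
    case True
    then have "\<alpha> x \<in> {1..n}" using OCT_rng[OF O] by auto
    then show ?thesis using True unfolding rho_def by auto
  next
    case False
    have "\<alpha> x = undefined" using OCT_D(1)[OF O] False by (simp add: PiE_iff extensional_def)
    moreover have "rho n \<beta> x = undefined" for \<beta> unfolding rho_def by (rule if_not_P[OF False])
    then have "rho n (rho n \<alpha>) x = undefined" by blast
    ultimately show ?thesis by simp
  qed
qed

lemma rho_fix:
  assumes O: "\<alpha> \<in> OCT n"
  shows "x \<in> fixset n (rho n \<alpha>) \<longleftrightarrow> x \<in> {1..n} \<and> Suc n - x \<in> fixset n \<alpha>"
proof (cases "x \<in> {1..n}")
  case True
  then have "Suc n - x \<in> {1..n}" by auto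
  then have "\<alpha> (Suc n - x) \<in> {1..n}" using OCT_rng[OF O] by blast
  then show ?thesis using True unfolding fixset_def rho_def by auto
next
  case False
  then show ?thesis unfolding fixset_def by auto
qed

lemma rho_height:
  assumes O: "\<alpha> \<in> OCT n"
  shows "height n (rho n \<alpha>) = height n \<alpha>"
proof -
  have i: "(\<lambda>x. Suc n - x) ` {1..n} = {1..n}"
  proof (rule set_eqI, rule iffI)
    fix y assume "y \<in> (\<lambda>x. Suc n - x) ` {1..n}" then show "y \<in> {1..n}" by auto
  next
    fix y assume y: "y \<in> {1..n}"
    then have "y = Suc n - (Suc n - y)" "Suc n - y \<in> {1..n}" by auto
    then show "y \<in> (\<lambda>x. Suc n - x) ` {1..n}" by blast
  qed
  have "rho n \<alpha> ` {1..n} = (\<lambda>x. Suc n - \<alpha> (Suc n - x)) ` {1..n}"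
    unfolding rho_def by auto
  also have "\<dots> = (\<lambda>v. Suc n - v) ` \<alpha> ` ((\<lambda>x. Suc n - x) ` {1..n})"
    by (simp add: image_image)
  also have "\<dots> = (\<lambda>v. Suc n - v) ` \<alpha> ` {1..n}" using i by simp
  finally have eq: "rho n \<alpha> ` {1..n} = (\<lambda>v. Suc n - v) ` (\<alpha> ` {1..n})" .
  have sub: "\<alpha> ` {1..n} \<subseteq> {1..n}" using OCT_rng[OF O] by auto
  have "inj_on (\<lambda>v. Suc n - v) {1..n}" by (auto simp: inj_on_def)
  then have "inj_on (\<lambda>v. Suc n - v) (\<alpha> ` {1..n})" using sub inj_on_subset by blast
  then show ?thesis unfolding height_def eq by (simp add: card_image)
qed

lemma sym_count:
  assumes "n \<ge> 2"
  shows "card {\<alpha> \<in> OCT n. fixset n \<alpha> = {1} \<and> height n \<alpha> = p}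
       = card {\<alpha> \<in> OCT n. fixset n \<alpha> = {n} \<and> height n \<alpha> = p}"
proof -
  let ?A = "{\<alpha> \<in> OCT n. fixset n \<alpha> = {1} \<and> height n \<alpha> = p}"
  let ?B = "{\<alpha> \<in> OCT n. fixset n \<alpha> = {n} \<and> height n \<alpha> = p}"
  have AB: "rho n \<alpha> \<in> ?B" if "\<alpha> \<in> ?A" for \<alpha>
  proof -
    have O: "\<alpha> \<in> OCT n" using that by auto
    have F: "fixset n \<alpha> = {1}" using that by blast
    have "fixset n (rho n \<alpha>) = {n}"
    proof (rule set_eqI)
      fix x
      show "x \<in> fixset n (rho n \<alpha>) \<longleftrightarrow> x \<in> {n}"
        unfolding rho_fix[OF O] F using assms by auto
    qed
    then show ?thesis using rho_OCT[OF O] rho_height[OF O] that by auto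
  qed
  have BA: "rho n \<alpha> \<in> ?A" if "\<alpha> \<in> ?B" for \<alpha>
  proof -
    have O: "\<alpha> \<in> OCT n" using that by auto
    have F: "fixset n \<alpha> = {n}" using that by blast
    have "fixset n (rho n \<alpha>) = {1}"
    proof (rule set_eqI)
      fix x
      show "x \<in> fixset n (rho n \<alpha>) \<longleftrightarrow> x \<in> {1}"
        unfolding rho_fix[OF O] F using assms by auto
    qed
    then show ?thesis using rho_OCT[OF O] rho_height[OF O] that by auto
  qed
  have "bij_betw (rho n) ?A ?B"
  proof (rule bij_betw_byWitness[where f' = "rho n"])
    show "\<forall>a\<in>?A. rho n (rho n a) = a" using rho_rho by blast
    show "\<forall>a\<in>?B. rho n (rho n a) = a" using rho_rho by blast
    show "rho n ` ?A \<subseteq> ?B" using AB by blast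
    show "rho n ` ?B \<subseteq> ?A" using BA by blast
  qed
  then show ?thesis by (rule bij_betw_same_card)
qed

theorem lemma2p2:
  fixes n p :: nat
  assumes "n \<ge> 2" and "1 \<le> p" and "p \<le> n - 1"
  shows "card {\<alpha> \<in> OCT n. fixset n \<alpha> = {1} \<and> height n \<alpha> = p}
           = card {\<alpha> \<in> OCT n. fixset n \<alpha> = {n} \<and> height n \<alpha> = p}
       \<and> card {\<alpha> \<in> OCT n. fixset n \<alpha> = {1} \<and> height n \<alpha> = p} = (n - 2) choose (p - 1)"
  using sym_count[OF assms(1), of p] char1[OF assms(1), of p] count1[OF assms(1,2)] by simp

end
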